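(* Consider an instance of ESUP with $n$ clients, $m$ days, integer deadlines $d_{i,j}\ge 1$ and equity parameter $k\in\{0,\dots,m\}$. Let $d^*_j=\max_{1\le i\le n} d_{i,j}$. Build the undirected bipartite graph $G$ with vertex sets $V=\{v_{i,j}: 1\le i\le n, 1\le j\le m\}$, $U=\{u_{d,j}: 1\le j\le m, 1\le d\le d^*_j\}$ and $W=\{w_{i,\ell}: 1\le i\le n, 1\le \ell\le m-k\}$, where for each $i,j$ the vertex $v_{i,j}$ is adjacent exactly to $w_{i,1},\dots,w_{i,m-k}$ and to $u_{1,j},\dots,u_{d_{i,j},j}$ (there are no other edges). Then $G$ has a matching of size $nm$ if and only if there exist schedules $\sigma_1,\dots,\sigma_m$ under which no client is unsatisfied on more than $m-k$ days (i.e., a $k$-equitable set of schedules exists).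
   Context: Equitable Scheduling model: there are $n$ clients and $m$ days; on each day $j$ each client $i$ has one job with integer processing time $p_{i,j}$ and integer deadline $d_{i,j}$, to be processed non-preemptively on a single machine. A schedule for day $j$ is a permutation $\sigma_j$ of $\{1,\dots,n\}$; the completion time of client $i$'s job on day $j$ is $C_{i,j}=\sum_{i_0:\sigma_j(i_0)\le\sigma_j(i)}p_{i_0,j}$. Client $i$ is satisfied on day $j$ if $C_{i,j}\le d_{i,j}$, otherwise unsatisfied. Given $k\in\{0,\dots,m\}$, a set of schedules $\{\sigma_1,\dots,\sigma_m\}$ is $k$-equitable if every client is satisfied on at least $k$ days. ESUP (Equitable Scheduling with Unit Processing Times) is the problem of deciding whether a $k$-equitable set of schedules exists when $p_{i,j}=1$ for all $i,j$ (so $C_{i,j}=\sigma_j(i)$). *)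

theory Defs
  imports Main
begin

definition is_schedule :: "nat \<Rightarrow> (nat \<Rightarrow> nat) \<Rightarrow> bool" where
  "is_schedule n s \<longleftrightarrow> bij_betw s {1..n} {1..n}"

definition completion_time ::
  "nat \<Rightarrow> (nat \<Rightarrow> nat \<Rightarrow> int) \<Rightarrow> (nat \<Rightarrow> nat \<Rightarrow> nat) \<Rightarrow> nat \<Rightarrow> nat \<Rightarrow> int" where
  "completion_time n p sigma i j = (\<Sum>i0\<in>{i0\<in>{1..n}. sigma j i0 \<le> sigma j i}. p i0 j)"

definition satisfied ::
  "nat \<Rightarrow> (nat \<Rightarrow> nat \<Rightarrow> int) \<Rightarrow> (nat \<Rightarrow> nat \<Rightarrow> int) \<Rightarrow> (nat \<Rightarrow> nat \<Rightarrow> nat) \<Rightarrow> nat \<Rightarrow> nat \<Rightarrow> bool" where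
  "satisfied n p d sigma i j \<longleftrightarrow> completion_time n p sigma i j \<le> d i j"

definition k_equitable ::
  "nat \<Rightarrow> nat \<Rightarrow> (nat \<Rightarrow> nat \<Rightarrow> int) \<Rightarrow> (nat \<Rightarrow> nat \<Rightarrow> int) \<Rightarrow> nat \<Rightarrow> (nat \<Rightarrow> nat \<Rightarrow> nat) \<Rightarrow> bool" where
  "k_equitable n m p d k sigma \<longleftrightarrow>
     (\<forall>j\<in>{1..m}. is_schedule n (sigma j)) \<and>
     (\<forall>i\<in>{1..n}. card {j\<in>{1..m}. satisfied n p d sigma i j} \<ge> k)"

definition unit_times :: "nat \<Rightarrow> nat \<Rightarrow> int" where
  "unit_times i j = 1"

datatype vert = V nat nat | U int nat | W nat nat

definition dstar :: "nat \<Rightarrow> (nat \<Rightarrow> nat \<Rightarrow> int) \<Rightarrow> nat \<Rightarrow> int" where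
  "dstar n d j = Max {d i j | i. i \<in> {1..n}}"

definition esup_vertices :: "nat \<Rightarrow> nat \<Rightarrow> nat \<Rightarrow> (nat \<Rightarrow> nat \<Rightarrow> int) \<Rightarrow> vert set" where
  "esup_vertices n m k d =
     {V i j | i j. i \<in> {1..n} \<and> j \<in> {1..m}} \<union>
     {U dd j | dd j. j \<in> {1..m} \<and> 1 \<le> dd \<and> dd \<le> dstar n d j} \<union>
     {W i l | i l. i \<in> {1..n} \<and> l \<in> {1..m - k}}"

definition esup_edges :: "nat \<Rightarrow> nat \<Rightarrow> nat \<Rightarrow> (nat \<Rightarrow> nat \<Rightarrow> int) \<Rightarrow> vert set set" where
  "esup_edges n m k d =
     {{V i j, W i l} | i j l. i \<in> {1..n} \<and> j \<in> {1..m} \<and> l \<in> {1..m - k}} \<union>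
     {{V i j, U dd j} | i j dd. i \<in> {1..n} \<and> j \<in> {1..m} \<and> 1 \<le> dd \<and> dd \<le> d i j}"

definition is_matching :: "'a set set \<Rightarrow> 'a set set \<Rightarrow> bool" where
  "is_matching E M \<longleftrightarrow> M \<subseteq> E \<and> (\<forall>e\<in>M. \<forall>e'\<in>M. e \<noteq> e' \<longrightarrow> e \<inter> e' = {})"

end

theory Submission
  imports Defs
begin


lemma perm_exists:
  fixes f :: "nat \<Rightarrow> int"
  assumes S: "S \<subseteq> {1..n}" and inj: "inj_on f S" and pos: "\<forall>i\<in>S. 1 \<le> f i"
  shows "\<exists>s. bij_betw s {1..n} {1..n} \<and> (\<forall>i\<in>S. int (s i) \<le> f i)"
proof -
  define r where "r i = card {i'\<in>S. f i' \<le> f i}" for i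
  have fin: "finite S" using S finite_subset by blast
  obtain g where g: "bij_betw g ({1..n}-S) {0..<card ({1..n}-S)}"
    using ex_bij_betw_finite_nat by blast
  define s where "s i = (if i \<in> S then r i else card S + 1 + g i)" for i
  have r_le: "int (r i) \<le> f i" if "i\<in>S" for i
  proof -
    have "f ` {i'\<in>S. f i' \<le> f i} \<subseteq> {1..f i}" using pos by auto
    moreover have "inj_on f {i'\<in>S. f i' \<le> f i}" by (rule inj_on_subset[OF inj]) auto
    ultimately have "card {i'\<in>S. f i' \<le> f i} \<le> card {1..f i}"
      using card_inj_on_le by blast
    then have "card {i'\<in>S. f i' \<le> f i} \<le> nat (f i)" by simp
    then have "int (r i) \<le> int (nat (f i))" unfolding r_def by (simp only: of_nat_le_iff)
    also have "\<dots> = f i" using pos that by force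
    finally show ?thesis .
  qed
  have r_rng: "1 \<le> r i \<and> r i \<le> card S" if "i\<in>S" for i
  proof -
    have "{i'\<in>S. f i' \<le> f i} \<noteq> {}" using that by auto
    moreover have "finite {i'\<in>S. f i' \<le> f i}" using fin by simp
    ultimately have "card {i'\<in>S. f i' \<le> f i} > 0" by (simp only: card_gt_0_iff) simp
    moreover have "card {i'\<in>S. f i' \<le> f i} \<le> card S" using fin by (intro card_mono) auto
    ultimately show ?thesis by (simp add: r_def)
  qed
  have r_lt: "r i < r i'" if "i\<in>S" "i'\<in>S" "f i < f i'" for i i'
  proof -
    have a: "{i''\<in>S. f i'' \<le> f i} \<subseteq> {i''\<in>S. f i'' \<le> f i'}" using that by auto
    have b: "i' \<in> {i''\<in>S. f i'' \<le> f i'}" "i' \<notin> {i''\<in>S. f i'' \<le> f i}" using that by auto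
    have "{i''\<in>S. f i'' \<le> f i} \<subset> {i''\<in>S. f i'' \<le> f i'}" using a b by blast
    then show ?thesis unfolding r_def using fin
      by (intro psubset_card_mono) auto
  qed
  have r_inj: "r i = r i' \<Longrightarrow> i = i'" if "i\<in>S" "i'\<in>S" for i i'
  proof -
    assume eq: "r i = r i'"
    show "i = i'"
    proof (rule ccontr)
      assume "i \<noteq> i'"
      then have "f i \<noteq> f i'" using inj that by (meson inj_on_def)
      then show False using r_lt[OF that] r_lt[OF that(2,1)] eq by (cases "f i < f i'") auto
    qed
  qed
  have cS: "card S \<le> n" using card_mono[OF _ S] by simp
  have cD: "card ({1..n}-S) = n - card S" using S fin by (simp add: card_Diff_subset)
  have img: "s ` {1..n} \<subseteq> {1..n}"
  proof
    fix y assume "y \<in> s ` {1..n}"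
    then obtain i where i: "i \<in> {1..n}" "y = s i" by auto
    show "y \<in> {1..n}"
    proof (cases "i\<in>S")
      case True then show ?thesis using r_rng[OF True] cS i by (auto simp: s_def)
    next
      case False
      then have "g i < n - card S" using g i cD by (auto simp: bij_betw_def)
      then show ?thesis using False i by (auto simp: s_def)
    qed
  qed
  have sinj: "inj_on s {1..n}"
  proof (rule inj_onI)
    fix i i' assume i: "i \<in> {1..n}" "i' \<in> {1..n}" and eq: "s i = s i'"
    show "i = i'"
    proof (cases "i\<in>S"; cases "i'\<in>S")
      assume "i\<in>S" "i'\<in>S" then show ?thesis using r_inj eq by (auto simp: s_def)
    next
      assume "i\<notin>S" "i'\<notin>S" then show ?thesis using g eq i
        by (auto simp: s_def bij_betw_def inj_on_def)
    next
      assume a: "i\<in>S" "i'\<notin>S" then have "s i \<le> card S" "s i' > card S" using r_rng by (auto simp: s_def)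
      then show ?thesis using eq by simp
    next
      assume a: "i\<notin>S" "i'\<in>S" then have "s i' \<le> card S" "s i > card S" using r_rng by (auto simp: s_def)
      then show ?thesis using eq by simp
    qed
  qed
  have "s ` {1..n} = {1..n}" using endo_inj_surj[OF _ img sinj] by simp
  then have "bij_betw s {1..n} {1..n}" using sinj by (simp add: bij_betw_def)
  moreover have "\<forall>i\<in>S. int (s i) \<le> f i" using r_le by (simp add: s_def)
  ultimately show ?thesis by (intro exI[of _ s]) simp
qed

lemma ct_unit:
  assumes b: "bij_betw s {1..n} {1..n}" and i: "i \<in> {1..(n::nat)}"
  shows "card {i0\<in>{1..n}. s i0 \<le> s i} = s i"
proof -
  have si: "s i \<in> {1..n}" using b i by (auto simp: bij_betw_def)
  have "s ` {i0\<in>{1..n}. s i0 \<le> s i} = {1..s i}"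
  proof
    show "s ` {i0\<in>{1..n}. s i0 \<le> s i} \<subseteq> {1..s i}"
    proof
      fix y assume "y \<in> s ` {i0\<in>{1..n}. s i0 \<le> s i}"
      then obtain x where x: "x \<in> {1..n}" "s x \<le> s i" "y = s x" by blast
      have "s x \<in> {1..n}" using bij_betw_apply[OF b x(1)] .
      then show "y \<in> {1..s i}" using x by simp
    qed
  next
    show "{1..s i} \<subseteq> s ` {i0\<in>{1..n}. s i0 \<le> s i}"
    proof
      fix y assume y: "y \<in> {1..s i}"
      then have "y \<in> {1..n}" using si by auto
      then have "y \<in> s ` {1..n}" using b by (simp add: bij_betw_def)
      then obtain x where "x \<in> {1..n}" "y = s x" by blast
      then show "y \<in> s ` {i0\<in>{1..n}. s i0 \<le> s i}" using y by auto
    qed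
  qed
  moreover have "inj_on s {i0\<in>{1..n}. s i0 \<le> s i}"
    using b unfolding bij_betw_def by (rule conjE) (erule inj_on_subset, blast)
  then have "card (s ` {i0\<in>{1..n}. s i0 \<le> s i}) = card {i0\<in>{1..n}. s i0 \<le> s i}"
    by (rule card_image)
  ultimately have "card {i0\<in>{1..n}. s i0 \<le> s i} = card {1..s i}" by simp
  then show ?thesis by simp
qed

lemma sat_unit:
  assumes "bij_betw (sigma j) {1..n} {1..n}" "i \<in> {1..n}"
  shows "satisfied n unit_times d sigma i j \<longleftrightarrow> int (sigma j i) \<le> d i j"
  unfolding satisfied_def completion_time_def unit_times_def
  using ct_unit[OF assms] by simp



lemma dir2:
  assumes eq: "k_equitable n m unit_times d k sigma" and km: "k \<le> m"
  shows "\<exists>M. is_matching (esup_edges n m k d) M \<and> card M = n*m"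
proof -
  have bij: "\<And>j. j\<in>{1..m} \<Longrightarrow> bij_betw (sigma j) {1..n} {1..n}"
    using eq by (auto simp: k_equitable_def is_schedule_def)
  define Sat where "Sat i = {j\<in>{1..m}. satisfied n unit_times d sigma i j}" for i
  define Uns where "Uns i = {j\<in>{1..m}. \<not> satisfied n unit_times d sigma i j}" for i
  have cardUn: "card (Uns i) \<le> m - k" if "i\<in>{1..n}" for i
  proof -
    have "Uns i = {1..m} - Sat i" by (auto simp: Uns_def Sat_def)
    moreover have "Sat i \<subseteq> {1..m}" by (auto simp: Sat_def)
    ultimately have "card (Uns i) = m - card (Sat i)" by (simp add: card_Diff_subset finite_subset)
    moreover have "card (Sat i) \<ge> k" using eq that by (auto simp: k_equitable_def Sat_def)
    ultimately show ?thesis by simp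
  qed
  have "\<forall>i. \<exists>h. bij_betw h (Uns i) {0..<card (Uns i)}"
  proof
    fix i have "finite (Uns i)" by (simp add: Uns_def)
    then show "\<exists>h. bij_betw h (Uns i) {0..<card (Uns i)}" by (rule ex_bij_betw_finite_nat)
  qed
  then obtain h where h: "\<And>i. bij_betw (h i) (Uns i) {0..<card (Uns i)}" by metis
  define mate where "mate i j = (if satisfied n unit_times d sigma i j
     then U (int (sigma j i)) j else W i (h i j + 1))" for i j
  define M where "M = (\<lambda>(i,j). {V i j, mate i j}) ` ({1..n}\<times>{1..m})"
  have notV: "mate i j \<noteq> V a b" for i j a b by (simp add: mate_def)
  have notV': "V a b \<noteq> mate i j" for i j a b by (simp add: mate_def)
  have mate_inj: "(i,j) = (i',j')" if eq: "mate i j = mate i' j'" and ij: "i\<in>{1..n}" "j\<in>{1..m}"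
     "i'\<in>{1..n}" "j'\<in>{1..m}" for i j i' j'
  proof (cases "satisfied n unit_times d sigma i j"; cases "satisfied n unit_times d sigma i' j'")
    assume s1: "satisfied n unit_times d sigma i j" and s2: "satisfied n unit_times d sigma i' j'"
    have m1: "mate i j = U (int (sigma j i)) j" using s1 by (simp add: mate_def)
    have m2: "mate i' j' = U (int (sigma j' i')) j'" using s2 by (simp add: mate_def)
    have "U (int (sigma j i)) j = U (int (sigma j' i')) j'" using eq by (simp only: m1 m2)
    then have jj0: "int (sigma j i) = int (sigma j' i') \<and> j = j'" by (rule iffD1[OF vert.inject(2)])
    then have j1: "j' = j" by simp
    have "sigma j i = sigma j' i'" using conjunct1[OF jj0] by simp
    then have jj: "j' = j" "sigma j i = sigma j i'" using j1 by simp_all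
    have "inj_on (sigma j) {1..n}" using bij[OF ij(2)] by (simp add: bij_betw_def)
    then have "i = i'" using jj(2) ij(1,3) by (simp add: inj_on_eq_iff)
    then show ?thesis using jj by simp
  next
    assume s1: "\<not> satisfied n unit_times d sigma i j" and s2: "\<not> satisfied n unit_times d sigma i' j'"
    have m1: "mate i j = W i (h i j + 1)" using s1 by (simp add: mate_def)
    have m2: "mate i' j' = W i' (h i' j' + 1)" using s2 by (simp add: mate_def)
    have "W i (h i j + 1) = W i' (h i' j' + 1)" using eq by (simp only: m1 m2)
    then have ii0: "i = i' \<and> h i j + 1 = h i' j' + 1" by (rule iffD1[OF vert.inject(3)])
    then have i1: "i' = i" by simp
    have "h i j = h i' j'" using conjunct2[OF ii0] by simp
    then have ii: "i' = i" "h i j = h i j'" using i1 by simp_all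
    have "j \<in> Uns i" "j' \<in> Uns i" using s1 s2 ij ii(1) by (auto simp: Uns_def)
    moreover have "inj_on (h i) (Uns i)" using h[of i] by (simp add: bij_betw_def)
    ultimately have "j = j'" using ii(2) by (simp add: inj_on_eq_iff)
    then show ?thesis using ii by simp
  next
    assume s1: "satisfied n unit_times d sigma i j" and s2: "\<not> satisfied n unit_times d sigma i' j'"
    have False using eq s1 s2 by (simp add: mate_def)
    then show ?thesis ..
  next
    assume s1: "\<not> satisfied n unit_times d sigma i j" and s2: "satisfied n unit_times d sigma i' j'"
    have False using eq s1 s2 by (simp add: mate_def)
    then show ?thesis ..
  qed
  have sub: "M \<subseteq> esup_edges n m k d"
  proof
    fix e assume "e \<in> M"
    then obtain i j where ij: "i\<in>{1..n}" "j\<in>{1..m}" "e = {V i j, mate i j}" by (auto simp: M_def)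
    show "e \<in> esup_edges n m k d"
    proof (cases "satisfied n unit_times d sigma i j")
      case True
      then have "int (sigma j i) \<le> d i j" using sat_unit[of sigma j n i d, OF bij[OF ij(2)] ij(1)] by simp
      moreover have "1 \<le> sigma j i" using bij[OF ij(2)] ij(1) by (auto simp: bij_betw_def)
      then have "e = {V i j, U (int (sigma j i)) j}" using ij True by (simp add: mate_def)
      then show ?thesis unfolding esup_edges_def
        apply (intro UnI2 CollectI)
        apply (rule exI[of _ i], rule exI[of _ j], rule exI[of _ "int (sigma j i)"])
        using ij \<open>int (sigma j i) \<le> d i j\<close> \<open>1 \<le> sigma j i\<close> by simp
    next
      case False
      then have "j \<in> Uns i" using ij by (auto simp: Uns_def)
      then have "h i j < card (Uns i)" using h[of i] by (auto simp: bij_betw_def)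
      then have "h i j + 1 \<in> {1..m-k}" using cardUn[OF ij(1)] by auto
      moreover have "e = {V i j, W i (h i j + 1)}" using ij False by (simp add: mate_def)
      ultimately show ?thesis unfolding esup_edges_def
        apply (intro UnI1 CollectI)
        apply (rule exI[of _ i], rule exI[of _ j], rule exI[of _ "h i j + 1"])
        using ij by simp
    qed
  qed
  have disj: "\<forall>e\<in>M. \<forall>e'\<in>M. e \<noteq> e' \<longrightarrow> e \<inter> e' = {}"
  proof (intro ballI impI)
    fix e e' assume ee: "e \<in> M" "e' \<in> M" "e \<noteq> e'"
    obtain i j where ij1: "(i,j) \<in> {1..n}\<times>{1..m}" "e = {V i j, mate i j}"
      using ee(1) unfolding M_def by blast
    obtain i' j' where ij2: "(i',j') \<in> {1..n}\<times>{1..m}" "e' = {V i' j', mate i' j'}"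
      using ee(2) unfolding M_def by blast
    have ij: "i\<in>{1..n}" "j\<in>{1..m}" "e = {V i j, mate i j}"
      "i'\<in>{1..n}" "j'\<in>{1..m}" "e' = {V i' j', mate i' j'}" using ij1 ij2 by auto
    then have ne: "(i,j) \<noteq> (i',j')" using \<open>e \<noteq> e'\<close> by auto
    then have "mate i j \<noteq> mate i' j'" using mate_inj ij by blast
    then show "e \<inter> e' = {}" using ij ne notV notV' by auto
  qed
  have inj: "inj_on (\<lambda>(i,j). {V i j, mate i j}) ({1..n}\<times>{1..m})"
  proof (rule inj_onI, clarify)
    fix i j i' j' assume "{V i j, mate i j} = {V i' j', mate i' j'}"
    then have "V i j \<in> {V i' j', mate i' j'}" by blast
    then show "i = i' \<and> j = j'" using notV notV' by auto
  qed
  have "card M = n * m" unfolding M_def using card_image[OF inj] by simp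
  then show ?thesis using sub disj by (auto simp: is_matching_def)
qed

definition goodv :: "nat \<Rightarrow> nat \<Rightarrow> nat \<Rightarrow> (nat \<Rightarrow> nat \<Rightarrow> int) \<Rightarrow> nat \<Rightarrow> nat \<Rightarrow> vert \<Rightarrow> bool" where
  "goodv n m k d i j x \<longleftrightarrow> (\<exists>l\<in>{1..m-k}. x = W i l) \<or> (\<exists>dd. 1 \<le> dd \<and> dd \<le> d i j \<and> x = U dd j)"

lemma edge_form:
  assumes "e \<in> esup_edges n m k d"
  shows "\<exists>i j x. e = {V i j, x} \<and> i\<in>{1..n} \<and> j\<in>{1..m} \<and> goodv n m k d i j x"
  using assms unfolding esup_edges_def goodv_def by blast

lemma edge_V:
  assumes "{V i j, x} \<in> esup_edges n m k d"
  shows "i\<in>{1..n} \<and> j\<in>{1..m} \<and> goodv n m k d i j x"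
  using assms unfolding esup_edges_def goodv_def by (auto simp: doubleton_eq_iff)

lemma goodv_notV: "goodv n m k d i j x \<Longrightarrow> x \<noteq> V a b"
  unfolding goodv_def by auto

lemma dir1:
  assumes mat: "is_matching (esup_edges n m k d) M" and cM: "card M = n*m" and km: "k \<le> m"
  shows "\<exists>sigma. k_equitable n m unit_times d k sigma"
proof -
  have sub: "M \<subseteq> esup_edges n m k d" and disj: "\<And>e e'. e\<in>M \<Longrightarrow> e'\<in>M \<Longrightarrow> e \<noteq> e' \<Longrightarrow> e \<inter> e' = {}"
    using mat by (auto simp: is_matching_def)
  have gM: "i\<in>{1..n} \<and> j\<in>{1..m} \<and> goodv n m k d i j x" if "{V i j, x} \<in> M" for i j x
    using edge_V sub that by blast
  have uniq1: "x = y" if "{V i j, x} \<in> M" "{V i j, y} \<in> M" for i j x y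
  proof (rule ccontr)
    assume "x \<noteq> y"
    have "x \<noteq> V i j" "y \<noteq> V i j" using gM that goodv_notV by blast+
    then have "{V i j, x} \<noteq> {V i j, y}" using \<open>x \<noteq> y\<close> by (auto simp: doubleton_eq_iff)
    then show False using disj[OF that] by auto
  qed
  have uniq2: "i = i' \<and> j = j'" if "{V i j, x} \<in> M" "{V i' j', x} \<in> M" for i j i' j' x
  proof (rule ccontr)
    assume ne: "\<not> (i = i' \<and> j = j')"
    have "x \<noteq> V i j" "x \<noteq> V i' j'" using gM that goodv_notV by blast+
    then have "{V i j, x} \<noteq> {V i' j', x}" using ne by (auto simp: doubleton_eq_iff)
    then show False using disj[OF that] by auto
  qed
  define mt where "mt i j = (SOME x. {V i j, x} \<in> M)" for i j
  define Vs where "Vs = {(i,j). \<exists>x. {V i j, x} \<in> M}"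
  have Vs_sub: "Vs \<subseteq> {1..n}\<times>{1..m}" using gM by (auto simp: Vs_def)
  have mt: "{V i j, mt i j} \<in> M" if "(i,j) \<in> Vs" for i j
    using that unfolding Vs_def mt_def by (auto intro: someI)
  have "M \<subseteq> (\<lambda>(i,j). {V i j, mt i j}) ` Vs"
  proof
    fix e assume e: "e \<in> M"
    then obtain i j x where ex: "e = {V i j, x}" using edge_form sub by blast
    then have ij: "(i,j) \<in> Vs" using e by (auto simp: Vs_def)
    then have "mt i j = x" using uniq1 mt e ex by blast
    then show "e \<in> (\<lambda>(i,j). {V i j, mt i j}) ` Vs" using ij ex by force
  qed
  moreover have finVs: "finite Vs" using Vs_sub finite_subset by blast
  ultimately have "card M \<le> card ((\<lambda>(i,j). {V i j, mt i j}) ` Vs)"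
    by (intro card_mono) auto
  also have "\<dots> \<le> card Vs" by (rule card_image_le[OF finVs])
  finally have "card M \<le> card Vs" .
  then have "card ({1..n}\<times>{1..m}) \<le> card Vs" using cM by (simp add: card_cartesian_product)
  moreover have "card Vs \<le> card ({1..n}\<times>{1..m})" using Vs_sub by (intro card_mono) auto
  ultimately have "card Vs = card ({1..n}\<times>{1..m})" by simp
  then have Vs_eq: "Vs = {1..n}\<times>{1..m}" using Vs_sub by (intro card_subset_eq) auto
  have mtM: "{V i j, mt i j} \<in> M" if "i\<in>{1..n}" "j\<in>{1..m}" for i j
    using mt Vs_eq that by auto
  have mtg: "goodv n m k d i j (mt i j)" if "i\<in>{1..n}" "j\<in>{1..m}" for i j
    using gM mtM[OF that] by blast
  define S where "S j = {i\<in>{1..n}. \<exists>dd. mt i j = U dd j}" for j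
  define f where "f j i = (case mt i j of U dd _ \<Rightarrow> dd | _ \<Rightarrow> 0)" for j i
  have fU: "mt i j = U (f j i) j" if "i \<in> S j" for i j
    using that by (auto simp: S_def f_def)
  have fd: "1 \<le> f j i \<and> f j i \<le> d i j" if "i \<in> S j" "j\<in>{1..m}" for i j
    using mtg[of i j] that fU[OF that(1)] by (auto simp: S_def goodv_def)
  have finj: "inj_on (f j) (S j)" if "j\<in>{1..m}" for j
  proof (rule inj_onI)
    fix i i' assume i: "i \<in> S j" "i' \<in> S j" and eq: "f j i = f j i'"
    have m1: "mt i j = U (f j i) j" "mt i' j = U (f j i) j" using fU i eq by auto
    have "i\<in>{1..n}" "i'\<in>{1..n}" using i by (auto simp: S_def)
    then have "{V i j, U (f j i) j} \<in> M" "{V i' j, U (f j i) j} \<in> M"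
      using mtM[of i j] mtM[of i' j] m1 that by auto
    then show "i = i'" using uniq2 by blast
  qed
  have "\<forall>j. \<exists>s. j\<in>{1..m} \<longrightarrow> bij_betw s {1..n} {1..n} \<and> (\<forall>i\<in>S j. int (s i) \<le> f j i)"
  proof
    fix j show "\<exists>s. j\<in>{1..m} \<longrightarrow> bij_betw s {1..n} {1..n} \<and> (\<forall>i\<in>S j. int (s i) \<le> f j i)"
    proof (cases "j\<in>{1..m}")
      case True
      have "S j \<subseteq> {1..n}" by (auto simp: S_def)
      then show ?thesis using perm_exists[of "S j" n "f j"] finj[OF True] fd True by blast
    next
      case False then show ?thesis by blast
    qed
  qed
  then obtain sigma where sig: "\<And>j. j\<in>{1..m} \<Longrightarrow> bij_betw (sigma j) {1..n} {1..n} \<and> (\<forall>i\<in>S j. int (sigma j i) \<le> f j i)"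
    by metis
  have "card {j\<in>{1..m}. satisfied n unit_times d sigma i j} \<ge> k" if i: "i\<in>{1..n}" for i
  proof -
    define A where "A = {j\<in>{1..m}. i \<in> S j}"
    define B where "B = {j\<in>{1..m}. i \<notin> S j}"
    define g where "g j = (case mt i j of W _ l \<Rightarrow> l | _ \<Rightarrow> 0)" for j
    have gW: "mt i j = W i (g j) \<and> g j \<in> {1..m-k}" if "j \<in> B" for j
    proof -
      have jm: "j\<in>{1..m}" and nS: "i \<notin> S j" using that by (auto simp: B_def)
      have "\<not>(\<exists>dd. mt i j = U dd j)" using nS i by (simp add: S_def)
      then obtain l where "l\<in>{1..m-k}" "mt i j = W i l"
        using mtg[OF i jm] unfolding goodv_def by blast
      then show ?thesis by (simp add: g_def)
    qed
    have "inj_on g B"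
    proof (rule inj_onI)
      fix j j' assume j: "j\<in>B" "j'\<in>B" and eq: "g j = g j'"
      have jm: "j\<in>{1..m}" "j'\<in>{1..m}" using j by (auto simp: B_def)
      have "{V i j, W i (g j)} \<in> M" using mtM[OF i jm(1)] gW[OF j(1)] by simp
      moreover have "{V i j', W i (g j)} \<in> M" using mtM[OF i jm(2)] gW[OF j(2)] eq by simp
      ultimately have "{V i j, W i (g j)} \<in> M" "{V i j', W i (g j)} \<in> M" .
      then show "j = j'" using uniq2 by blast
    qed
    moreover have "g ` B \<subseteq> {1..m-k}" using gW by auto
    ultimately have "card B \<le> card {1..m-k}" by (intro card_inj_on_le) auto
    then have cB: "card B \<le> m - k" by simp
    have "A = {1..m} - B" by (auto simp: A_def B_def)
    moreover have "B \<subseteq> {1..m}" by (auto simp: B_def)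
    ultimately have "card A = m - card B" by (simp add: card_Diff_subset finite_subset)
    then have cA: "card A \<ge> k" using cB km by simp
    have "A \<subseteq> {j\<in>{1..m}. satisfied n unit_times d sigma i j}"
    proof
      fix j assume j: "j \<in> A"
      then have jm: "j\<in>{1..m}" and iS: "i \<in> S j" by (auto simp: A_def)
      have "int (sigma j i) \<le> f j i" using sig[OF jm] iS by blast
      then have "int (sigma j i) \<le> d i j" using fd[OF iS jm] by linarith
      then show "j \<in> {j\<in>{1..m}. satisfied n unit_times d sigma i j}"
        using sat_unit[of sigma j n i d] sig[OF jm] i jm by simp
    qed
    then have "card A \<le> card {j\<in>{1..m}. satisfied n unit_times d sigma i j}"
      by (intro card_mono) auto
    then show ?thesis using cA by simp
  qed
  then have "k_equitable n m unit_times d k sigma"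
    unfolding k_equitable_def is_schedule_def using sig by blast
  then show ?thesis by blast
qed

theorem lemma1:
  fixes n m k :: nat and d :: "nat \<Rightarrow> nat \<Rightarrow> int"
  assumes "k \<le> m"
    and "\<forall>i\<in>{1..n}. \<forall>j\<in>{1..m}. d i j \<ge> 1"
  shows "(\<exists>M. is_matching (esup_edges n m k d) M \<and> card M = n * m) \<longleftrightarrow>
         (\<exists>sigma. k_equitable n m unit_times d k sigma)"
proof
  assume "\<exists>M. is_matching (esup_edges n m k d) M \<and> card M = n * m"
  then obtain M where "is_matching (esup_edges n m k d) M" "card M = n * m" by blast
  then show "\<exists>sigma. k_equitable n m unit_times d k sigma" using dir1 assms(1) by blast
next
  assume "\<exists>sigma. k_equitable n m unit_times d k sigma"
  then obtain sigma where "k_equitable n m unit_times d k sigma" by blast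
  then show "\<exists>M. is_matching (esup_edges n m k d) M \<and> card M = n * m" using dir2 assms(1) by blast
qed

end
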